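(* Fix $T>1$ and constants $A,B>0$. Let $\mathbb{P}_0$ be the law of the set of event times in $[0,T]$ of an inhomogeneous Poisson point process with rate function $\Lambda_0(t)=B$, and let $\mathbb{P}_1$ be the corresponding law for the rate function \[ \Lambda_1(t)=B+Ae^{-(t-1)}\mathbf 1(t\ge 1). \] If $A/\sqrt{B}\to 0$, then no estimator can correctly detect a jump at $t=1$ with probability greater than $1/2+o(1)$; that is, for every test $\psi$ (a measurable function of the observed event times with values in $\{0,1\}$, where $\psi=1$ declares a jump at $t=1$), one has $\tfrac12\big(\mathbb{P}_0(\psi=0)+\mathbb{P}_1(\psi=1)\big)\le \tfrac12+o(1)$.
   Context: An inhomogeneous Poisson point process with (deterministic) rate function $\Lambda\ge 0$ is a point process on $[0,\infty)$ whose number of points in disjoint intervals are independent and whose number of points in an interval $I$ is Poisson with mean $\int_I\Lambda(s)\,ds$. The asymptotics $o(1)$ are as the parameters vary with $A/\sqrt B\to 0$. *)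

theory Defs
  imports "HOL-Probability.Probability"
begin

definition rate1 :: "real \<Rightarrow> real \<Rightarrow> real \<Rightarrow> real" where
  "rate1 A B t = B + (if t \<ge> 1 then A * exp (- (t - 1)) else 0)"

definition ppp_mean :: "real \<Rightarrow> (real \<Rightarrow> real) \<Rightarrow> real" where
  "ppp_mean T \<Lambda> = (\<integral>t\<in>{0..T}. \<Lambda> t \<partial>lborel)"

(* Sample space: (number of points N, i.i.d. sequence of locations) *)
definition obs_space :: "(nat \<times> (nat \<Rightarrow> real)) measure" where
  "obs_space = count_space UNIV \<Otimes>\<^sub>M (\<Pi>\<^sub>M i\<in>UNIV. borel)"

(* Standard construction of the inhomogeneous Poisson point process on [0,T]:
   N ~ Poisson(int_0^T Lambda), and independently i.i.d. locations with density
   Lambda / int_0^T Lambda on [0,T]; the process is {X_i : i < N}. *)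
definition ppp_sample :: "real \<Rightarrow> (real \<Rightarrow> real) \<Rightarrow> (nat \<times> (nat \<Rightarrow> real)) measure" where
  "ppp_sample T \<Lambda> =
     measure_pmf (poisson_pmf (ppp_mean T \<Lambda>)) \<Otimes>\<^sub>M
     (\<Pi>\<^sub>M i\<in>UNIV. density lborel (\<lambda>t. ennreal (indicator {0..T} t * \<Lambda> t / ppp_mean T \<Lambda>)))"

definition event_times :: "nat \<times> (nat \<Rightarrow> real) \<Rightarrow> real set" where
  "event_times \<omega> = (snd \<omega>) ` {..<fst \<omega>}"

definition ppp_prob :: "real \<Rightarrow> (real \<Rightarrow> real) \<Rightarrow> (real set \<Rightarrow> bool) \<Rightarrow> real" where
  "ppp_prob T \<Lambda> P =
     measure (ppp_sample T \<Lambda>) {\<omega> \<in> space (ppp_sample T \<Lambda>). P (event_times \<omega>)}"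

end

theory Submission
  imports Defs
begin


lemma PiM_density_prod:
  fixes M :: "'a measure" and r :: "'a \<Rightarrow> ennreal"
  assumes "finite I" and P0: "prob_space M" and P1: "prob_space (density M r)"
    and r[measurable]: "r \<in> borel_measurable M"
  shows "PiM I (\<lambda>_. density M r) = density (PiM I (\<lambda>_. M)) (\<lambda>x. \<Prod>i\<in>I. r (x i))"
proof -
  interpret P: product_prob_space "\<lambda>_. density M r" I
    using P1 by (intro product_prob_spaceI) auto
  interpret Q: product_prob_space "\<lambda>_. M" I
    using P0 by (intro product_prob_spaceI) auto
  show ?thesis
  proof (rule P.PiM_eqI[symmetric])
    show "finite I" by fact
    show "sets (density (PiM I (\<lambda>_. M)) (\<lambda>x. \<Prod>i\<in>I. r (x i))) = sets (PiM I (\<lambda>_. density M r))"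
      by (auto intro!: sets_PiM_cong)
  next
    fix A assume A: "\<And>i. i \<in> I \<Longrightarrow> A i \<in> sets (density M r)"
    then have A'[measurable]: "\<And>i. i \<in> I \<Longrightarrow> A i \<in> sets M" by auto
    have "emeasure (density (PiM I (\<lambda>_. M)) (\<lambda>x. \<Prod>i\<in>I. r (x i))) (PiE I A)
       = (\<integral>\<^sup>+ x. (\<Prod>i\<in>I. r (x i)) * indicator (PiE I A) x \<partial>PiM I (\<lambda>_. M))"
      using A' by (subst emeasure_density) (auto intro!: sets_PiM_I_finite \<open>finite I\<close>)
    also have "\<dots> = (\<integral>\<^sup>+ x. (\<Prod>i\<in>I. r (x i) * indicator (A i) (x i)) \<partial>PiM I (\<lambda>_. M))"
    proof (rule nn_integral_cong)
      fix x assume "x \<in> space (PiM I (\<lambda>_. M))"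
      then have x: "x \<in> PiE I (\<lambda>_. space M)" by (simp add: space_PiM)
      show "(\<Prod>i\<in>I. r (x i)) * indicator (PiE I A) x = (\<Prod>i\<in>I. r (x i) * indicator (A i) (x i))"
        using x by (auto simp: prod.distrib indicator_def PiE_def Pi_def prod_zero_iff \<open>finite I\<close>)
    qed
    also have "\<dots> = (\<Prod>i\<in>I. \<integral>\<^sup>+ y. r y * indicator (A i) y \<partial>M)"
      using A' by (subst Q.product_nn_integral_prod) (auto simp: \<open>finite I\<close>)
    also have "\<dots> = (\<Prod>i\<in>I. emeasure (density M r) (A i))"
      using A' by (intro prod.cong) (auto simp: emeasure_density)
    finally show "emeasure (density (PiM I (\<lambda>_. M)) (\<lambda>x. \<Prod>i\<in>I. r (x i))) (PiE I A) = (\<Prod>i\<in>I. emeasure (density M r) (A i))" .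
  qed
qed



lemma slice_bound:
  fixes M :: "'a measure" and r :: "'a \<Rightarrow> real"
  assumes "finite I" and P0: "prob_space M"
    and r[measurable]: "r \<in> borel_measurable M"
    and rnn: "\<And>x. x \<in> space M \<Longrightarrow> 0 \<le> r x"
    and rR: "\<And>x. x \<in> space M \<Longrightarrow> r x \<le> R"
    and r1: "(\<integral>\<^sup>+ x. ennreal (r x) \<partial>M) = 1"
    and E[measurable]: "E \<in> sets (PiM I (\<lambda>_. M))"
    and l: "0 \<le> l" and eta: "0 < \<eta>"
  shows "l * measure (PiM I (\<lambda>_. density M r)) E \<le>
     (1 + \<eta>) * measure (PiM I (\<lambda>_. M)) E +
     (l\<^sup>2 * (\<integral>x. (r x)\<^sup>2 \<partial>M) ^ card I - 2 * l + 1) / (4 * \<eta>)"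
proof -
  interpret M: prob_space M by fact
  have P1: "prob_space (density M r)"
    by (rule prob_spaceI) (simp add: emeasure_density r1)
  interpret Q: product_prob_space "\<lambda>_. M" I
    using P0 by (intro product_prob_spaceI) auto
  have R0: "0 \<le> R" using rnn rR M.not_empty by (meson ex_in_conv order.trans)
  define g where "g x = (\<Prod>i\<in>I. r (x i))" for x
  have gm[measurable]: "g \<in> borel_measurable (PiM I (\<lambda>_. M))" unfolding g_def by measurable
  have gnn: "0 \<le> g x" "g x \<le> R ^ card I" if "x \<in> space (PiM I (\<lambda>_. M))" for x
  proof -
    have "\<And>i. i \<in> I \<Longrightarrow> x i \<in> space M" using that by (auto simp: space_PiM)
    then show "0 \<le> g x" "g x \<le> R ^ card I" unfolding g_def
      using rnn rR by (auto intro!: prod_nonneg prod_mono[where g="\<lambda>_. R", simplified])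
  qed
  have gint: "integrable (PiM I (\<lambda>_. M)) g"
    by (rule Q.P.integrable_const_bound[where B="R ^ card I"]) (use gnn in auto)
  have g2int: "integrable (PiM I (\<lambda>_. M)) (\<lambda>x. (g x)\<^sup>2)"
    by (rule Q.P.integrable_const_bound[where B="(R ^ card I)\<^sup>2"])
       (use gnn in \<open>auto intro!: power_mono\<close>)
  have rint: "integrable M r"
    by (rule M.integrable_const_bound[where B=R]) (use rnn rR in auto)
  have r2int: "integrable M (\<lambda>x. (r x)\<^sup>2)"
    by (rule M.integrable_const_bound[where B="R\<^sup>2"]) (use rnn rR in \<open>auto intro!: power_mono\<close>)
  have int_r: "(\<integral>x. r x \<partial>M) = 1"
  proof -
    have "ennreal (\<integral>x. r x \<partial>M) = 1"
      using r1 by (subst nn_integral_eq_integral[symmetric]) (use rint rnn in auto)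
    then show ?thesis by simp
  qed
  have int_g: "(\<integral>x. g x \<partial>PiM I (\<lambda>_. M)) = 1"
    unfolding g_def using rint int_r \<open>finite I\<close> by (subst Q.product_integral_prod) auto
  have int_g2: "(\<integral>x. (g x)\<^sup>2 \<partial>PiM I (\<lambda>_. M)) = (\<integral>x. (r x)\<^sup>2 \<partial>M) ^ card I"
    unfolding g_def prod_power_distrib using r2int \<open>finite I\<close>
    by (subst Q.product_integral_prod) auto
  have dens: "PiM I (\<lambda>_. density M r) = density (PiM I (\<lambda>_. M)) (\<lambda>x. ennreal (g x))"
  proof -
    have "PiM I (\<lambda>_. density M r) = density (PiM I (\<lambda>_. M)) (\<lambda>x. \<Prod>i\<in>I. ennreal (r (x i)))"
      by (rule PiM_density_prod[OF \<open>finite I\<close> P0 P1]) simp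
    also have "\<dots> = density (PiM I (\<lambda>_. M)) (\<lambda>x. ennreal (\<Prod>i\<in>I. r (x i)))"
    proof (rule density_cong)
      show "AE x in PiM I (\<lambda>_. M). (\<Prod>i\<in>I. ennreal (r (x i))) = ennreal (\<Prod>i\<in>I. r (x i))"
      proof (rule AE_I2)
        fix x assume "x \<in> space (PiM I (\<lambda>_. M))"
        then have "\<And>i. i \<in> I \<Longrightarrow> x i \<in> space M" by (auto simp: space_PiM)
        then show "(\<Prod>i\<in>I. ennreal (r (x i))) = ennreal (\<Prod>i\<in>I. r (x i))"
          using rnn by (intro prod_ennreal) auto
      qed
    qed measurable
    finally show ?thesis unfolding g_def .
  qed
  have gEint: "integrable (PiM I (\<lambda>_. M)) (\<lambda>x. g x * indicator E x)"
    by (rule Q.P.integrable_const_bound[where B="R ^ card I"])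
       (use gnn R0 in \<open>auto simp: indicator_def\<close>)
  have mQ1: "measure (PiM I (\<lambda>_. density M r)) E = (\<integral>x. g x * indicator E x \<partial>PiM I (\<lambda>_. M))"
  proof -
    have "emeasure (PiM I (\<lambda>_. density M r)) E = (\<integral>\<^sup>+ x. ennreal (g x * indicator E x) \<partial>PiM I (\<lambda>_. M))"
      unfolding dens by (subst emeasure_density) (auto intro!: nn_integral_cong simp: indicator_def)
    also have "\<dots> = ennreal (\<integral>x. g x * indicator E x \<partial>PiM I (\<lambda>_. M))"
      using gEint gnn by (intro nn_integral_eq_integral) (auto intro!: AE_I2)
    finally show ?thesis unfolding measure_def
      using gEint gnn by (auto intro!: integral_nonneg_AE AE_I2)
  qed
  have indint: "integrable (PiM I (\<lambda>_. M)) (\<lambda>x. indicator E x :: real)"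
    by (rule Q.P.integrable_const_bound[where B=1]) (auto simp: indicator_def)
  define h where "h x = (1 + \<eta>) * indicator E x + (l * g x - 1)\<^sup>2 / (4 * \<eta>)" for x
  have pt: "l * (g x * indicator E x) \<le> h x" for x
  proof (cases "x \<in> E")
    case True
    have "0 \<le> (l * g x - 1 - 2 * \<eta>)\<^sup>2" by simp
    then have "4 * \<eta> * (l * g x) \<le> 4 * \<eta> * (1 + \<eta>) + (l * g x - 1)\<^sup>2"
      by (simp add: power2_eq_square algebra_simps)
    then show ?thesis using True eta unfolding h_def by (simp add: field_simps)
  next
    case False
    then show ?thesis using eta unfolding h_def by simp
  qed
  have sq: "(l * g x - 1)\<^sup>2 = l\<^sup>2 * (g x)\<^sup>2 - 2 * l * g x + 1" for x
    by (simp add: power2_eq_square algebra_simps)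
  have int_sq: "(\<integral>x. (l * g x - 1)\<^sup>2 \<partial>PiM I (\<lambda>_. M)) = l\<^sup>2 * (\<integral>x. (r x)\<^sup>2 \<partial>M) ^ card I - 2 * l + 1"
    unfolding sq using g2int gint int_g int_g2 Q.P.prob_space
    by (simp add: integral_add integral_diff)
  have sqint: "integrable (PiM I (\<lambda>_. M)) (\<lambda>x. (l * g x - 1)\<^sup>2)"
    unfolding sq using g2int gint by auto
  have "l * measure (PiM I (\<lambda>_. density M r)) E = (\<integral>x. l * (g x * indicator E x) \<partial>PiM I (\<lambda>_. M))"
    unfolding mQ1 by simp
  also have "\<dots> \<le> (\<integral>x. h x \<partial>PiM I (\<lambda>_. M))"
    using gEint sqint pt indint unfolding h_def by (intro integral_mono) auto
  also have "\<dots> = (1 + \<eta>) * measure (PiM I (\<lambda>_. M)) E + (\<integral>x. (l * g x - 1)\<^sup>2 \<partial>PiM I (\<lambda>_. M)) / (4 * \<eta>)"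
    unfolding h_def using sqint indint by (simp add: integral_add)
  finally show ?thesis unfolding int_sq .
qed



lemma pair_pmf_sums:
  fixes p :: "nat pmf" and M :: "'b measure"
  assumes PM: "prob_space M" and S: "S \<in> sets (measure_pmf p \<Otimes>\<^sub>M M)"
  shows "(\<lambda>n. pmf p n * measure M (Pair n -` S)) sums measure (measure_pmf p \<Otimes>\<^sub>M M) S"
proof -
  interpret M: prob_space M by fact
  interpret PP: prob_space "measure_pmf p \<Otimes>\<^sub>M M"
    by (intro prob_space_pair M.prob_space_axioms measure_pmf.prob_space_axioms)
  define f where "f n = pmf p n * measure M (Pair n -` S)" for n
  have f0: "0 \<le> f n" for n unfolding f_def by simp
  have "emeasure (measure_pmf p \<Otimes>\<^sub>M M) S = (\<integral>\<^sup>+ n. emeasure M (Pair n -` S) \<partial>measure_pmf p)"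
    using S by (rule M.emeasure_pair_measure_alt)
  also have "\<dots> = (\<integral>\<^sup>+ n. ennreal (f n) \<partial>count_space UNIV)"
    unfolding nn_integral_measure_pmf f_def
    by (simp add: M.emeasure_eq_measure ennreal_mult)
  also have "\<dots> = (\<Sum>n. ennreal (f n))"
    by (rule nn_integral_count_space_nat)
  finally have eq: "(\<Sum>n. ennreal (f n)) = ennreal (measure (measure_pmf p \<Otimes>\<^sub>M M) S)"
    by (simp add: PP.emeasure_eq_measure)
  have sm: "summable f"
    using eq f0 by (intro summable_suminf_not_top) auto
  have "ennreal (suminf f) = ennreal (measure (measure_pmf p \<Otimes>\<^sub>M M) S)"
    using eq suminf_ennreal2[OF f0 sm] by simp
  then have "suminf f = measure (measure_pmf p \<Otimes>\<^sub>M M) S"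
    using f0 sm by (simp add: suminf_nonneg)
  then show ?thesis using sm unfolding f_def[abs_def] by (metis summable_sums)
qed

lemma slice_eq:
  fixes n :: nat and \<mu> :: "real measure" and \<psi> :: "real set \<Rightarrow> bool"
  assumes P: "prob_space \<mu>" and sets\<mu>: "sets \<mu> = sets borel"
    and hyp: "(\<lambda>\<omega>. \<psi> (event_times \<omega>)) \<in> measurable obs_space (count_space UNIV)"
  shows "{y \<in> space (PiM {..<n} (\<lambda>_. \<mu>)). \<psi> (y ` {..<n})} \<in> sets (PiM {..<n} (\<lambda>_. \<mu>))"
    and "measure (PiM UNIV (\<lambda>_. \<mu>)) {x \<in> space (PiM UNIV (\<lambda>_. \<mu>)). \<psi> (x ` {..<n})}
         = measure (PiM {..<n} (\<lambda>_. \<mu>)) {y \<in> space (PiM {..<n} (\<lambda>_. \<mu>)). \<psi> (y ` {..<n})}"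
proof -
  interpret Q: product_prob_space "\<lambda>_. \<mu>" UNIV
    using P by (intro product_prob_spaceI) auto
  have sp: "space \<mu> = UNIV" using sets_eq_imp_space_eq[OF sets\<mu>] by simp
  define ext where "ext y = (n, (\<lambda>i::nat. if i < n then y i else 0::real))" for y :: "nat \<Rightarrow> real"
  have e1: "(\<lambda>y. \<lambda>i::nat. if i < n then y i else 0::real) \<in> measurable (PiM {..<n} (\<lambda>_. borel)) (PiM UNIV (\<lambda>_. borel))"
  proof (rule measurable_PiM_single')
    fix i :: nat
    show "(\<lambda>y. if i < n then y i else 0::real) \<in> borel_measurable (PiM {..<n} (\<lambda>_. borel))"
      by (cases "i < n") (auto intro!: measurable_component_singleton)
  qed auto
  have extm: "ext \<in> measurable (PiM {..<n} (\<lambda>_. \<mu>)) obs_space"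
    unfolding ext_def obs_space_def
    by (intro measurable_Pair measurable_const)
       (auto simp: measurable_cong_sets[OF sets_PiM_cong[OF refl sets\<mu>] refl] e1)
  have comp: "(\<lambda>y. \<psi> (event_times (ext y))) \<in> measurable (PiM {..<n} (\<lambda>_. \<mu>)) (count_space UNIV)"
    by (rule measurable_compose[OF extm hyp])
  have evt: "event_times (ext y) = y ` {..<n}" for y
    unfolding event_times_def ext_def by auto
  have Eeq: "{y \<in> space (PiM {..<n} (\<lambda>_. \<mu>)). \<psi> (y ` {..<n})} = (\<lambda>y. \<psi> (event_times (ext y))) -` {True} \<inter> space (PiM {..<n} (\<lambda>_. \<mu>))"
    by (auto simp: evt)
  show E: "{y \<in> space (PiM {..<n} (\<lambda>_. \<mu>)). \<psi> (y ` {..<n})} \<in> sets (PiM {..<n} (\<lambda>_. \<mu>))"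
    unfolding Eeq by (rule measurable_sets[OF comp]) simp
  have "{x \<in> space (PiM UNIV (\<lambda>_. \<mu>)). \<psi> (x ` {..<n})} = prod_emb UNIV (\<lambda>_. \<mu>) {..<n} {y \<in> space (PiM {..<n} (\<lambda>_. \<mu>)). \<psi> (y ` {..<n})}"
    unfolding prod_emb_def by (auto simp: space_PiM sp)
  then show "measure (PiM UNIV (\<lambda>_. \<mu>)) {x \<in> space (PiM UNIV (\<lambda>_. \<mu>)). \<psi> (x ` {..<n})}
         = measure (PiM {..<n} (\<lambda>_. \<mu>)) {y \<in> space (PiM {..<n} (\<lambda>_. \<mu>)). \<psi> (y ` {..<n})}"
    using Q.emeasure_PiM_emb'[OF _ _ E] by (simp add: measure_def)
qed


lemma rate1_meas[measurable]: "rate1 A B \<in> borel_measurable borel"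
  unfolding rate1_def[abs_def] by measurable

lemma rate1_bounds:
  assumes "0 < A"
  shows "B \<le> rate1 A B t" "rate1 A B t \<le> B + A" "(rate1 A B t - B)\<^sup>2 \<le> A\<^sup>2"
proof -
  have e: "exp (- (t - 1)) \<le> 1" if "t \<ge> 1" using that by simp
  show "B \<le> rate1 A B t" using assms by (simp add: rate1_def)
  show "rate1 A B t \<le> B + A" using assms e
    by (auto simp: rate1_def mult_left_le[of _ A, simplified])
  have "0 \<le> rate1 A B t - B" "rate1 A B t - B \<le> A"
    using assms e by (auto simp: rate1_def mult_left_le[of _ A, simplified])
  then show "(rate1 A B t - B)\<^sup>2 \<le> A\<^sup>2" by (intro power_mono) auto
qed

lemma int_bounded_01:
  fixes g :: "real \<Rightarrow> real"
  assumes [measurable]: "g \<in> borel_measurable borel" and K: "\<And>t. \<bar>g t\<bar> \<le> K"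
  shows "integrable lborel (\<lambda>t. indicator {0..T} t * g t)"
proof (rule Bochner_Integration.integrable_bound)
  show "integrable lborel (\<lambda>t. K * indicator {0..T} t :: real)"
    by (intro integrable_mult_right integrable_real_indicator) (auto simp: emeasure_lborel_Icc_eq)
  show "(\<lambda>t. indicator {0..T} t * g t) \<in> borel_measurable lborel" by measurable
  show "AE x in lborel. norm (indicator {0..T} x * g x) \<le> norm (K * indicator {0..T} x :: real)"
  proof (rule AE_I2)
    fix x
    have "0 \<le> K" using K[of 0] by linarith
    then show "norm (indicator {0..T} x * g x) \<le> norm (K * indicator {0..T} x :: real)"
      using K[of x] by (auto simp: indicator_def)
  qed
qed


lemma pois_sums:
  assumes "0 < m"
  shows "(\<lambda>n. pmf (poisson_pmf m) n * x ^ n) sums exp (m * (x - 1))"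
proof -
  have "(\<lambda>n. (m * x) ^ n /\<^sub>R fact n * exp (- m)) sums (exp (m * x) * exp (- m))"
    by (intro sums_mult2 exp_converges)
  moreover have "exp (m * x) * exp (- m) = exp (m * (x - 1))"
    by (simp add: exp_add[symmetric] algebra_simps)
  moreover have "(m * x) ^ n /\<^sub>R fact n * exp (- m) = pmf (poisson_pmf m) n * x ^ n" for n
    using assms by (simp add: power_mult_distrib divide_inverse)
  ultimately show ?thesis by simp
qed


lemma ppp_mean_eq: "ppp_mean T \<Lambda> = (\<integral>t. indicator {0..T} t * \<Lambda> t \<partial>lborel)"
  unfolding ppp_mean_def set_lebesgue_integral_def by simp

lemma ppp_decomp:
  fixes \<Lambda> :: "real \<Rightarrow> real" and \<psi> :: "real set \<Rightarrow> bool"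
  assumes \<Lambda>m[measurable]: "\<Lambda> \<in> borel_measurable borel" and \<Lambda>nn: "\<And>t. 0 \<le> \<Lambda> t"
    and \<Lambda>K: "\<And>t. \<Lambda> t \<le> K"
    and mpos: "0 < ppp_mean T \<Lambda>"
    and hyp: "(\<lambda>\<omega>. \<psi> (event_times \<omega>)) \<in> measurable obs_space (count_space UNIV)"
  defines "\<mu> \<equiv> density lborel (\<lambda>t. ennreal (indicator {0..T} t * \<Lambda> t / ppp_mean T \<Lambda>))"
  shows "prob_space \<mu>"
    and "(\<lambda>n. pmf (poisson_pmf (ppp_mean T \<Lambda>)) n * measure (PiM {..<n} (\<lambda>_. \<mu>))
            {y \<in> space (PiM {..<n} (\<lambda>_. \<mu>)). \<psi> (y ` {..<n})}) sums ppp_prob T \<Lambda> \<psi>"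
    and "ppp_prob T \<Lambda> (\<lambda>S. \<not> \<psi> S) = 1 - ppp_prob T \<Lambda> \<psi>"
proof -
  define m where "m = ppp_mean T \<Lambda>"
  have m0: "0 < m" using mpos by (simp add: m_def)
  have int: "integrable lborel (\<lambda>t. indicator {0..T} t * \<Lambda> t)"
    by (rule int_bounded_01[where K=K]) (simp, metis \<Lambda>nn \<Lambda>K abs_of_nonneg)
  have "emeasure \<mu> (space \<mu>) = (\<integral>\<^sup>+ t. ennreal (indicator {0..T} t * \<Lambda> t / m) \<partial>lborel)"
    unfolding \<mu>_def m_def by (simp add: emeasure_density)
  also have "\<dots> = ennreal (\<integral>t. indicator {0..T} t * \<Lambda> t / m \<partial>lborel)"
    using int m0 \<Lambda>nn by (intro nn_integral_eq_integral) (auto intro!: AE_I2)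
  also have "(\<integral>t. indicator {0..T} t * \<Lambda> t / m \<partial>lborel) = 1"
    using m0 by (simp add: m_def ppp_mean_eq[symmetric])
  finally show P\<mu>: "prob_space \<mu>" by (intro prob_spaceI) simp
  have sets\<mu>: "sets \<mu> = sets borel" unfolding \<mu>_def by simp
  have sp\<mu>: "space \<mu> = UNIV" unfolding \<mu>_def by simp
  interpret Q: product_prob_space "\<lambda>_. \<mu>" UNIV
    using P\<mu> by (intro product_prob_spaceI) auto
  define P where "P = ppp_sample T \<Lambda>"
  have P_eq: "P = measure_pmf (poisson_pmf m) \<Otimes>\<^sub>M PiM UNIV (\<lambda>_. \<mu>)"
    unfolding P_def ppp_sample_def \<mu>_def m_def ..
  have setsP: "sets P = sets obs_space"
    unfolding P_eq obs_space_def
    by (intro sets_pair_measure_cong sets_PiM_cong) (auto simp: sets\<mu>)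
  have spP: "space P = UNIV"
    using sets_eq_imp_space_eq[OF setsP] by (simp add: obs_space_def space_pair_measure space_PiM)
  define S where "S = {\<omega> \<in> space P. \<psi> (event_times \<omega>)}"
  have hypP: "(\<lambda>\<omega>. \<psi> (event_times \<omega>)) \<in> measurable P (count_space UNIV)"
    using hyp by (simp add: measurable_cong_sets[OF setsP refl])
  have S: "S \<in> sets P"
  proof -
    have "S = (\<lambda>\<omega>. \<psi> (event_times \<omega>)) -` {True} \<inter> space P" unfolding S_def by auto
    then show ?thesis using measurable_sets[OF hypP] by simp
  qed
  interpret PP: prob_space P
    unfolding P_eq by (intro prob_space_pair Q.P.prob_space_axioms measure_pmf.prob_space_axioms)
  show "ppp_prob T \<Lambda> (\<lambda>S. \<not> \<psi> S) = 1 - ppp_prob T \<Lambda> \<psi>"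
  proof -
    have "{\<omega> \<in> space P. \<not> \<psi> (event_times \<omega>)} = space P - S" unfolding S_def by auto
    then show ?thesis unfolding ppp_prob_def P_def[symmetric] S_def[symmetric]
      using PP.prob_compl[OF S] by simp
  qed
  have slice: "Pair n -` S = {x \<in> space (PiM UNIV (\<lambda>_. \<mu>)). \<psi> (x ` {..<n})}" for n
    unfolding S_def spP by (auto simp: event_times_def space_PiM sp\<mu>)
  have "(\<lambda>n. pmf (poisson_pmf m) n * measure (PiM UNIV (\<lambda>_. \<mu>)) (Pair n -` S)) sums measure P S"
    unfolding P_eq by (rule pair_pmf_sums[OF Q.P.prob_space_axioms S[unfolded P_eq]])
  then show "(\<lambda>n. pmf (poisson_pmf (ppp_mean T \<Lambda>)) n * measure (PiM {..<n} (\<lambda>_. \<mu>))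
            {y \<in> space (PiM {..<n} (\<lambda>_. \<mu>)). \<psi> (y ` {..<n})}) sums ppp_prob T \<Lambda> \<psi>"
    unfolding slice slice_eq(2)[OF P\<mu> sets\<mu> hyp] ppp_prob_def P_def[symmetric] S_def[symmetric] m_def .
qed



theorem proposition2p1:
  fixes T :: real
  assumes "T > 1"
  shows "\<forall>\<epsilon>>0. \<exists>\<delta>>0. \<forall>(A::real) (B::real) (\<psi>::real set \<Rightarrow> bool).
           A > 0 \<longrightarrow> B > 0 \<longrightarrow> A / sqrt B < \<delta> \<longrightarrow>
           (\<lambda>\<omega>. \<psi> (event_times \<omega>)) \<in> measurable obs_space (count_space UNIV) \<longrightarrow>
           (1/2) * (ppp_prob T (\<lambda>_. B) (\<lambda>S. \<not> \<psi> S) + ppp_prob T (rate1 A B) \<psi>)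
             \<le> 1/2 + \<epsilon>"
proof (intro allI impI)
  fix \<epsilon> :: real assume "\<epsilon> > 0"
  have T0: "0 < T" using assms by simp
  define \<delta> where "\<delta> = sqrt (ln (1 + 4 * \<epsilon>\<^sup>2) / T)"
  have "0 < ln (1 + 4 * \<epsilon>\<^sup>2)" using \<open>\<epsilon> > 0\<close> by (simp add: ln_gt_zero)
  then have d0: "0 < \<delta>" unfolding \<delta>_def using T0 by simp
  show "\<exists>\<delta>>0. \<forall>(A::real) (B::real) (\<psi>::real set \<Rightarrow> bool).
           A > 0 \<longrightarrow> B > 0 \<longrightarrow> A / sqrt B < \<delta> \<longrightarrow>
           (\<lambda>\<omega>. \<psi> (event_times \<omega>)) \<in> measurable obs_space (count_space UNIV) \<longrightarrow>
           (1/2) * (ppp_prob T (\<lambda>_. B) (\<lambda>S. \<not> \<psi> S) + ppp_prob T (rate1 A B) \<psi>)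
             \<le> 1/2 + \<epsilon>"
  proof (intro exI[of _ \<delta>] conjI allI impI d0)
    fix A B :: real and \<psi> :: "real set \<Rightarrow> bool"
    assume A0: "A > 0" and B0: "B > 0" and AB: "A / sqrt B < \<delta>"
      and hyp: "(\<lambda>\<omega>. \<psi> (event_times \<omega>)) \<in> measurable obs_space (count_space UNIV)"
    define m0 where "m0 = ppp_mean T (\<lambda>_. B)"
    define m1 where "m1 = ppp_mean T (rate1 A B)"
    have intI: "integrable lborel (\<lambda>t. indicator {0..T} t :: real)"
      by (intro integrable_real_indicator) (auto simp: emeasure_lborel_Icc_eq)
    have m0_eq: "m0 = B * T"
    proof -
      have "m0 = (\<integral>t. indicator {0..T} t \<partial>lborel) * B"
        unfolding m0_def ppp_mean_eq by simp
      also have "(\<integral>t. indicator {0..T} t \<partial>lborel) = T"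
        using T0 by (simp add: emeasure_lborel_Icc_eq)
      finally show ?thesis by simp
    qed
    have m0pos: "0 < m0" using m0_eq B0 T0 by simp
    have int1: "integrable lborel (\<lambda>t. indicator {0..T} t * rate1 A B t)"
    proof (rule int_bounded_01[where K="B+A"])
      fix t show "\<bar>rate1 A B t\<bar> \<le> B + A" using rate1_bounds(1,2)[OF A0, of B t] B0 by linarith
    qed simp
    have int2: "integrable lborel (\<lambda>t. indicator {0..T} t * (rate1 A B t)\<^sup>2)"
    proof (rule int_bounded_01[where K="(B+A)\<^sup>2"])
      fix t show "\<bar>(rate1 A B t)\<^sup>2\<bar> \<le> (B + A)\<^sup>2" using rate1_bounds(1,2)[OF A0, of B t] B0
        by (auto intro!: power_mono)
    qed simp
    have m1ge: "m0 \<le> m1"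
      unfolding m0_def m1_def ppp_mean_eq
      using int1 intI rate1_bounds[OF A0, of B]
      by (intro integral_mono) (auto simp: indicator_def)
    have m1pos: "0 < m1" using m0pos m1ge by simp
    define \<mu>0 where "\<mu>0 = density lborel (\<lambda>t. ennreal (indicator {0..T} t * B / m0))"
    define \<mu>1 where "\<mu>1 = density lborel (\<lambda>t. ennreal (indicator {0..T} t * rate1 A B t / m1))"
    note D0 = ppp_decomp[where \<Lambda>="\<lambda>_. B" and K=B and T=T and \<psi>=\<psi>, OF _ _ _ _ hyp,
        folded m0_def, folded \<mu>0_def]
    note D1 = ppp_decomp[where \<Lambda>="rate1 A B" and K="B+A" and T=T and \<psi>=\<psi>, OF _ _ _ _ hyp,
        folded m1_def, folded \<mu>1_def]
    have P0: "prob_space \<mu>0" and S0: "(\<lambda>n. pmf (poisson_pmf m0) n * measure (PiM {..<n} (\<lambda>_. \<mu>0))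
            {y \<in> space (PiM {..<n} (\<lambda>_. \<mu>0)). \<psi> (y ` {..<n})}) sums ppp_prob T (\<lambda>_. B) \<psi>"
      and C0: "ppp_prob T (\<lambda>_. B) (\<lambda>S. \<not> \<psi> S) = 1 - ppp_prob T (\<lambda>_. B) \<psi>"
      using D0 B0 m0pos by auto
    have P1: "prob_space \<mu>1" and S1: "(\<lambda>n. pmf (poisson_pmf m1) n * measure (PiM {..<n} (\<lambda>_. \<mu>1))
            {y \<in> space (PiM {..<n} (\<lambda>_. \<mu>1)). \<psi> (y ` {..<n})}) sums ppp_prob T (rate1 A B) \<psi>"
      using D1 B0 m1pos rate1_bounds[OF A0, of B] by (auto intro: order.trans[OF less_imp_le[OF B0]])
    define r where "r t = T * rate1 A B t / m1" for t
    have rm[measurable]: "r \<in> borel_measurable \<mu>0"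
      unfolding r_def[abs_def] \<mu>0_def by simp
    have rmb[measurable]: "r \<in> borel_measurable borel"
      unfolding r_def[abs_def] by simp
    have rnn: "0 \<le> r t" for t
      unfolding r_def using rate1_bounds(1)[OF A0, of B t] B0 T0 m1pos by simp
    have rR: "r t \<le> T * (B + A) / m1" for t
      unfolding r_def using rate1_bounds(2)[OF A0, of B t] T0 m1pos
      by (intro divide_right_mono mult_left_mono) auto
    have mu1_eq: "\<mu>1 = density \<mu>0 (\<lambda>t. ennreal (r t))"
      unfolding \<mu>0_def \<mu>1_def
    proof (subst density_density_eq)
      show "density lborel (\<lambda>t. ennreal (indicator {0..T} t * rate1 A B t / m1)) =
            density lborel (\<lambda>x. ennreal (indicator {0..T} x * B / m0) * ennreal (r x))"
      proof (rule density_cong)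
        show "AE x in lborel. ennreal (indicator {0..T} x * rate1 A B x / m1) =
              ennreal (indicator {0..T} x * B / m0) * ennreal (r x)"
        proof (rule AE_I2)
          fix x
          have eqx: "indicator {0..T} x * rate1 A B x / m1 = (indicator {0..T} x * B / m0) * r x"
            unfolding r_def m0_eq using B0 T0 m1pos by (simp add: field_simps)
          show "ennreal (indicator {0..T} x * rate1 A B x / m1) =
              ennreal (indicator {0..T} x * B / m0) * ennreal (r x)"
          proof -
            have "ennreal (indicator {0..T} x * B / m0 * r x) = ennreal (indicator {0..T} x * B / m0) * ennreal (r x)"
              using B0 m0pos rnn[of x] by (intro ennreal_mult) auto
            with eqx show ?thesis by simp
          qed
        qed
      qed measurable
    qed measurable
    have sp0: "space \<mu>0 = UNIV" unfolding \<mu>0_def by simp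
    have r1: "(\<integral>\<^sup>+ x. ennreal (r x) \<partial>\<mu>0) = 1"
    proof -
      have "emeasure \<mu>1 (space \<mu>1) = 1" using P1 by (simp add: prob_space.emeasure_space_1)
      then show ?thesis unfolding mu1_eq
        by (subst (asm) emeasure_density) (auto simp: sp0 \<mu>0_def)
    qed
    define c where "c = (\<integral>x. (r x)\<^sup>2 \<partial>\<mu>0)"
    define J2 where "J2 = (\<integral>t. indicator {0..T} t * (rate1 A B t)\<^sup>2 \<partial>lborel)"
    have c_eq: "c = (\<integral>t. indicator {0..T} t * B / m0 * (r t)\<^sup>2 \<partial>lborel)"
      unfolding c_def \<mu>0_def using B0 m0pos
      by (subst integral_density) (auto intro!: AE_I2)
    also have "\<dots> = (\<integral>t. indicator {0..T} t * (rate1 A B t)\<^sup>2 * (B * T\<^sup>2 / (m0 * m1\<^sup>2)) \<partial>lborel)"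
      unfolding r_def using m0pos m1pos by (intro Bochner_Integration.integral_cong) (auto simp: field_simps power2_eq_square)
    also have "\<dots> = J2 * (B * T\<^sup>2 / (m0 * m1\<^sup>2))"
      unfolding J2_def by simp
    finally have c_eq2: "m1\<^sup>2 * c / m0 = J2 / B"
      using m0pos m1pos B0 T0 unfolding m0_eq by (simp add: field_simps power2_eq_square)
    define \<kappa> where "\<kappa> = m0 - 2 * m1 + m1\<^sup>2 * c / m0"
    have kappa_eq: "\<kappa> = (\<integral>t. indicator {0..T} t * (rate1 A B t - B)\<^sup>2 / B \<partial>lborel)"
    proof -
      have pw: "indicator {0..T} t * (rate1 A B t - B)\<^sup>2 / B =
          indicator {0..T} t * (rate1 A B t)\<^sup>2 / B - 2 * (indicator {0..T} t * rate1 A B t) + indicator {0..T} t * B" for t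
        using B0 by (simp add: field_simps power2_eq_square)
      have "(\<integral>t. indicator {0..T} t * (rate1 A B t - B)\<^sup>2 / B \<partial>lborel) =
          J2 / B - 2 * m1 + m0"
        unfolding pw J2_def m1_def m0_def ppp_mean_eq using int1 int2 intI
        by (simp add: integral_add integral_diff)
      then show ?thesis unfolding \<kappa>_def c_eq2 by simp
    qed
    have int3: "integrable lborel (\<lambda>t. indicator {0..T} t * ((rate1 A B t - B)\<^sup>2 / B))"
    proof (rule int_bounded_01[where K="A\<^sup>2 / B"])
      fix t show "\<bar>(rate1 A B t - B)\<^sup>2 / B\<bar> \<le> A\<^sup>2 / B"
        using rate1_bounds(3)[OF A0, of B t] B0 by (simp add: divide_right_mono)
    qed simp
    have kappa_le: "\<kappa> \<le> T * (A\<^sup>2 / B)"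
    proof -
      have "\<kappa> \<le> (\<integral>t. indicator {0..T} t * (A\<^sup>2 / B) \<partial>lborel)"
        unfolding kappa_eq using int3 intI rate1_bounds(3)[OF A0, of B] B0
        by (intro integral_mono) (auto simp: indicator_def divide_right_mono)
      also have "\<dots> = T * (A\<^sup>2 / B)"
        using T0 by (simp add: emeasure_lborel_Icc_eq)
      finally show ?thesis .
    qed
    define p0 where "p0 n = pmf (poisson_pmf m0) n" for n
    define l where "l n = exp (m0 - m1) * (m1 / m0) ^ n" for n
    have l0: "0 \<le> l n" for n unfolding l_def using m0pos m1pos by simp
    have p_rel: "pmf (poisson_pmf m1) n = p0 n * l n" for n
      unfolding p0_def l_def using m0pos m1pos
      by (simp add: exp_diff power_divide field_simps exp_minus)
    have p0nn: "0 \<le> p0 n" for n unfolding p0_def by simp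
    define E where "E n = {y \<in> space (PiM {..<n} (\<lambda>_. \<mu>0)). \<psi> (y ` {..<n})}" for n :: nat
    have sets0: "sets \<mu>0 = sets borel" unfolding \<mu>0_def by simp
    have sp1: "space \<mu>1 = UNIV" unfolding \<mu>1_def by simp
    have E1: "{y \<in> space (PiM {..<n} (\<lambda>_. \<mu>1)). \<psi> (y ` {..<n})} = E n" for n :: nat
      unfolding E_def by (simp add: space_PiM sp0 sp1)
    have Esets: "E n \<in> sets (PiM {..<n} (\<lambda>_. \<mu>0))" for n :: nat
      unfolding E_def by (rule slice_eq(1)[OF P0 sets0 hyp])
    define \<eta> where "\<eta> = \<epsilon>"
    have eta0: "0 < \<eta>" unfolding \<eta>_def using \<open>\<epsilon> > 0\<close> by simp
    define D where "D n = (l n)\<^sup>2 * c ^ n - 2 * l n + 1" for n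
    define a0 where "a0 n = p0 n * measure (PiM {..<n} (\<lambda>_. \<mu>0)) (E n)" for n
    define a1 where "a1 n = pmf (poisson_pmf m1) n * measure (PiM {..<n} (\<lambda>_. \<mu>1)) (E n)" for n
    have per: "a1 n \<le> (1 + \<eta>) * a0 n + p0 n * D n / (4 * \<eta>)" for n
    proof -
      have "l n * measure (PiM {..<n} (\<lambda>_. density \<mu>0 r)) (E n) \<le>
         (1 + \<eta>) * measure (PiM {..<n} (\<lambda>_. \<mu>0)) (E n) +
         ((l n)\<^sup>2 * (\<integral>x. (r x)\<^sup>2 \<partial>\<mu>0) ^ card {..<n} - 2 * l n + 1) / (4 * \<eta>)"
        by (rule slice_bound[OF finite_lessThan P0 rm rnn rR r1 Esets l0 eta0])
      then have "l n * measure (PiM {..<n} (\<lambda>_. \<mu>1)) (E n) \<le>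
         (1 + \<eta>) * measure (PiM {..<n} (\<lambda>_. \<mu>0)) (E n) + D n / (4 * \<eta>)"
        unfolding mu1_eq D_def c_def by simp
      from mult_left_mono[OF this p0nn[of n]] show ?thesis
        unfolding a1_def a0_def p_rel by (simp add: algebra_simps)
    qed
    have sA0: "a0 sums ppp_prob T (\<lambda>_. B) \<psi>"
      using S0 unfolding a0_def p0_def E_def .
    have sA1: "a1 sums ppp_prob T (rate1 A B) \<psi>"
      using S1 unfolding a1_def E1 .
    have s1: "(\<lambda>n. p0 n * (l n)\<^sup>2 * c ^ n) sums exp \<kappa>"
    proof -
      have h1: "(\<lambda>n. exp (2 * (m0 - m1)) * (p0 n * ((m1 / m0)\<^sup>2 * c) ^ n)) sums
            (exp (2 * (m0 - m1)) * exp (m0 * ((m1 / m0)\<^sup>2 * c - 1)))"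
        unfolding p0_def by (intro sums_mult pois_sums m0pos)
      have h2: "exp (2 * (m0 - m1)) * exp (m0 * ((m1 / m0)\<^sup>2 * c - 1)) = exp \<kappa>"
        unfolding \<kappa>_def using m0pos by (simp add: exp_add[symmetric] field_simps power2_eq_square)
      have h3: "exp (2 * (m0 - m1)) * (p0 n * ((m1 / m0)\<^sup>2 * c) ^ n) = p0 n * (l n)\<^sup>2 * c ^ n" for n
      proof -
        have e2: "exp (2 * (m0 - m1)) = exp (m0 - m1) * exp (m0 - m1)" by (metis exp_add mult_2)
        have pw: "((m1 / m0)\<^sup>2 * c) ^ n = (m1 / m0) ^ n * (m1 / m0) ^ n * c ^ n"
          by (simp only: power_mult_distrib power2_eq_square)
        show ?thesis unfolding l_def e2 pw by (simp add: power2_eq_square mult_ac)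
      qed
      show ?thesis using h1 unfolding h2 h3 .
    qed
    have s3: "p0 sums 1"
      using pois_sums[OF m0pos, of 1] unfolding p0_def by simp
    have s2: "(\<lambda>n. p0 n * l n) sums 1"
      using pois_sums[OF m1pos, of 1] unfolding p_rel by simp
    have sD: "(\<lambda>n. p0 n * D n / (4 * \<eta>)) sums ((exp \<kappa> - 1) / (4 * \<eta>))"
    proof -
      have "(\<lambda>n. p0 n * (l n)\<^sup>2 * c ^ n - 2 * (p0 n * l n) + p0 n) sums (exp \<kappa> - 2 * 1 + 1)"
        by (intro sums_add sums_diff sums_mult s1 s2 s3)
      then have "(\<lambda>n. p0 n * D n) sums (exp \<kappa> - 1)"
        unfolding D_def by (simp add: algebra_simps)
      then show ?thesis by (rule sums_divide)
    qed
    have sR: "(\<lambda>n. (1 + \<eta>) * a0 n + p0 n * D n / (4 * \<eta>)) sums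
        ((1 + \<eta>) * ppp_prob T (\<lambda>_. B) \<psi> + (exp \<kappa> - 1) / (4 * \<eta>))"
      by (intro sums_add sums_mult sA0 sD)
    have main: "ppp_prob T (rate1 A B) \<psi> \<le> (1 + \<eta>) * ppp_prob T (\<lambda>_. B) \<psi> + (exp \<kappa> - 1) / (4 * \<eta>)"
      by (rule sums_le[OF per sA1 sR])
    have pr0: "0 \<le> ppp_prob T (\<lambda>_. B) \<psi>" "ppp_prob T (\<lambda>_. B) \<psi> \<le> 1"
    proof -
      have "0 \<le> ppp_prob T (\<lambda>_. B) (\<lambda>S. \<not> \<psi> S)" unfolding ppp_prob_def by (rule measure_nonneg)
      moreover have "0 \<le> ppp_prob T (\<lambda>_. B) \<psi>" unfolding ppp_prob_def by (rule measure_nonneg)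
      ultimately show "0 \<le> ppp_prob T (\<lambda>_. B) \<psi>" "ppp_prob T (\<lambda>_. B) \<psi> \<le> 1" using C0 by linarith+
    qed
    have AB2: "A\<^sup>2 / B < \<delta>\<^sup>2"
    proof -
      have "0 \<le> A / sqrt B" using A0 B0 by simp
      then have "(A / sqrt B)\<^sup>2 < \<delta>\<^sup>2" using AB by (intro power_strict_mono) auto
      then show ?thesis using B0 by (simp add: power_divide)
    qed
    have "T * (A\<^sup>2 / B) < ln (1 + 4 * \<epsilon>\<^sup>2)"
    proof -
      have "\<delta>\<^sup>2 = ln (1 + 4 * \<epsilon>\<^sup>2) / T" unfolding \<delta>_def
        using \<open>0 < ln (1 + 4 * \<epsilon>\<^sup>2)\<close> T0 by simp
      moreover have "T * (A\<^sup>2 / B) < T * \<delta>\<^sup>2" using AB2 T0 by (rule mult_strict_left_mono)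
      ultimately show ?thesis using T0 by (simp add: field_simps)
    qed
    then have "\<kappa> < ln (1 + 4 * \<epsilon>\<^sup>2)" using kappa_le by linarith
    then have "exp \<kappa> < 1 + 4 * \<epsilon>\<^sup>2"
    proof -
      have "0 < 1 + 4 * \<epsilon>\<^sup>2" by (simp add: add_pos_nonneg)
      then show ?thesis using \<open>\<kappa> < ln (1 + 4 * \<epsilon>\<^sup>2)\<close> by (metis exp_less_cancel_iff exp_ln)
    qed
    then have "(exp \<kappa> - 1) / (4 * \<eta>) \<le> \<epsilon>"
      unfolding \<eta>_def using \<open>\<epsilon> > 0\<close> by (simp add: field_simps power2_eq_square)
    then show "(1/2) * (ppp_prob T (\<lambda>_. B) (\<lambda>S. \<not> \<psi> S) + ppp_prob T (rate1 A B) \<psi>) \<le> 1/2 + \<epsilon>"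
    proof -
      have "\<epsilon> * ppp_prob T (\<lambda>_. B) \<psi> \<le> \<epsilon>" using pr0 \<open>0 < \<epsilon>\<close> by (simp add: mult_left_le)
      then show ?thesis using main pr0 C0 \<open>(exp \<kappa> - 1) / (4 * \<eta>) \<le> \<epsilon>\<close> unfolding \<eta>_def
        by (simp add: algebra_simps)
    qed
  qed
qed


end
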